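(* $\mathtt{incl}$-$\mathtt{ESO}$-$\mathtt{HORN}\subseteq\mathtt{Trellis}$.
   Context: Fix a finite alphabet $\Sigma$. A nonempty word $w=w_1\cdots w_n$ is represented by the structure $\langle w\rangle=([1,n];(Q_s)_{s\in\Sigma},\mathtt{min},\mathtt{max},\mathtt{suc},\mathtt{pred})$ with $Q_s(i)\iff w_i=s$, $\mathtt{min}(i)\iff i=1$, $\mathtt{max}(i)\iff i=n$, $\mathtt{suc}(i)=\min(i+1,n)$, $\mathtt{pred}(i)=\max(i-1,1)$. For an integer $a$, $x+a$ denotes $\mathtt{suc}^a(x)$ if $a\ge0$ and $\mathtt{pred}^{-a}(x)$ if $a<0$; $y-b=\mathtt{pred}^b(y)$. An inclusion Horn formula is $\Phi=\exists\mathbf{R}\forall x\forall y\,\psi(x,y)$, $\mathbf{R}$ a finite set of binary relation symbols, $\psi$ a conjunction of Horn clauses over $\{(Q_s)_{s\in\Sigma},\mathtt{min},\mathtt{max},\mathtt{suc},\mathtt{pred}\}\cup\mathbf{R}\cup\{=,\le,<\}$, each of the form $x\le y\wedge\delta_1\wedge\cdots\wedge\delta_r\to\delta_0$ with $\delta_0$ an atom $R(x,y)$ ($R\in\mathbf{R}$) or $\bot$, each $\delta_i$ one of: $U(x+a)$, $\neg U(x+a)$, $U(y+a)$, $\neg U(y+a)$ for $U\in\{(Q_s)_{s\in\Sigma},\mathtt{min},\mathtt{max}\}$, $a\in\mathbb Z$; $x=y$ or $x<y$; $S(x+a,y-b)\wedge x+a\le y-b$ with $S\in\mathbf{R}$,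 $a,b\ge0$. $\mathtt{incl}$-$\mathtt{ESO}$-$\mathtt{HORN}$ is the class of languages $\{w\in\Sigma^+:\langle w\rangle\models\Phi\}$. A one-way cellular automaton (OCA) is $(Q,\Sigma,Q_{accept},\{-1,0\},\delta)$ with finite $Q\supseteq\Sigma$, $Q_{accept}\subseteq Q$, $\delta:Q^2\to Q$; on input $w=w_1\cdots w_n$ it uses cells $1,\dots,n$ (cells outside permanently in a state $\sharp$), with $\langle c,1\rangle=w_c$ and $\langle c,t\rangle=\delta(\langle c-1,t-1\rangle,\langle c,t-1\rangle)$ for $t>1$. $\mathtt{Trellis}$ is the class of languages $L\subseteq\Sigma^+$ such that some OCA satisfies $w\in L\iff\langle n,n\rangle\in Q_{accept}$ for all $w$ of length $n$ (equivalently, languages accepted by trellis automata). *)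

theory Defs
  imports Main
begin

text \<open>A nonempty word w of length n is the structure on positions 1..n.
  Position i carries the letter w ! (i - 1).\<close>

definition suc_w :: "nat \<Rightarrow> nat \<Rightarrow> nat" where
  "suc_w n i = min (i + 1) n"

definition pred_w :: "nat \<Rightarrow> nat" where
  "pred_w i = max (i - 1) 1"

definition shift :: "nat \<Rightarrow> nat \<Rightarrow> int \<Rightarrow> nat" where
  "shift n x a = (if a \<ge> 0 then (suc_w n ^^ nat a) x else (pred_w ^^ nat (- a)) x)"

definition backw :: "nat \<Rightarrow> nat \<Rightarrow> nat" where
  "backw y b = (pred_w ^^ b) y"

text \<open>Relation symbols of R are represented by natural numbers; a formula
  mentions only finitely many of them.\<close>

datatype 's upred = Q 's | MinP | MaxP

datatype 's hyp =
    UX "'s upred" int bool      \<comment> \<open>U(x+a) if bool is True, \<not>U(x+a) otherwise\<close>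
  | UY "'s upred" int bool      \<comment> \<open>U(y+a) / \<not>U(y+a)\<close>
  | XeqY
  | XltY
  | RelH nat nat nat             \<comment> \<open>S(x+a, y-b) \<and> x+a \<le> y-b, with a b \<ge> 0\<close>

text \<open>Head: Some R means R(x,y), None means \<bottom>.\<close>
type_synonym 's clause = "'s hyp list \<times> nat option"

text \<open>An inclusion Horn formula \<exists>R \<forall>x \<forall>y \<psi>, \<psi> a finite conjunction of clauses.\<close>
type_synonym 's horn_formula = "'s clause list"

fun upred_holds :: "'s list \<Rightarrow> 's upred \<Rightarrow> nat \<Rightarrow> bool" where
  "upred_holds w (Q s) i = (w ! (i - 1) = s)"
| "upred_holds w MinP i = (i = 1)"
| "upred_holds w MaxP i = (i = length w)"

fun hyp_holds :: "'s list \<Rightarrow> (nat \<Rightarrow> nat \<Rightarrow> nat \<Rightarrow> bool) \<Rightarrow> nat \<Rightarrow> nat \<Rightarrow> 's hyp \<Rightarrow> bool" where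
  "hyp_holds w I x y (UX U a p) = (upred_holds w U (shift (length w) x a) = p)"
| "hyp_holds w I x y (UY U a p) = (upred_holds w U (shift (length w) y a) = p)"
| "hyp_holds w I x y XeqY = (x = y)"
| "hyp_holds w I x y XltY = (x < y)"
| "hyp_holds w I x y (RelH S a b) =
     (I S (shift (length w) x (int a)) (backw y b) \<and> shift (length w) x (int a) \<le> backw y b)"

fun head_holds :: "(nat \<Rightarrow> nat \<Rightarrow> nat \<Rightarrow> bool) \<Rightarrow> nat \<Rightarrow> nat \<Rightarrow> nat option \<Rightarrow> bool" where
  "head_holds I x y None = False"
| "head_holds I x y (Some R) = I R x y"

definition clause_holds :: "'s list \<Rightarrow> (nat \<Rightarrow> nat \<Rightarrow> nat \<Rightarrow> bool) \<Rightarrow> nat \<Rightarrow> nat \<Rightarrow> 's clause \<Rightarrow> bool" where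
  "clause_holds w I x y cl =
     ((x \<le> y \<and> (\<forall>h \<in> set (fst cl). hyp_holds w I x y h)) \<longrightarrow> head_holds I x y (snd cl))"

text \<open>I R is the interpretation of relation symbol R (as a binary relation
  on positions; only its values on [1,n] matter).\<close>
definition horn_sat :: "'s horn_formula \<Rightarrow> 's list \<Rightarrow> bool" where
  "horn_sat \<Phi> w = (\<exists>I. \<forall>x \<in> {1..length w}. \<forall>y \<in> {1..length w}.
       \<forall>cl \<in> set \<Phi>. clause_holds w I x y cl)"

definition horn_lang :: "'s horn_formula \<Rightarrow> 's list set" where
  "horn_lang \<Phi> = {w. w \<noteq> [] \<and> horn_sat \<Phi> w}"

definition incl_ESO_HORN :: "'s list set set" where
  "incl_ESO_HORN = {L. \<exists>\<Phi>. L = horn_lang \<Phi>}"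

text \<open>States are natural numbers from a finite set Qs; input letters are
  embedded injectively into Qs by emb; bd is the border state \<sharp>;
  delta (left neighbour) (own state).  oca_run w t c is the state of cell c
  (1 \<le> c \<le> n) at time t+1.\<close>

fun oca_run :: "(nat \<Rightarrow> nat \<Rightarrow> nat) \<Rightarrow> nat \<Rightarrow> ('s \<Rightarrow> nat) \<Rightarrow> 's list \<Rightarrow> nat \<Rightarrow> nat \<Rightarrow> nat" where
  "oca_run \<delta> bd emb w 0 c = emb (w ! (c - 1))"
| "oca_run \<delta> bd emb w (Suc t) c =
     \<delta> (if c \<le> 1 then bd else oca_run \<delta> bd emb w t (c - 1)) (oca_run \<delta> bd emb w t c)"

definition oca_accepts :: "(nat \<Rightarrow> nat \<Rightarrow> nat) \<Rightarrow> nat \<Rightarrow> ('s \<Rightarrow> nat) \<Rightarrow> nat set \<Rightarrow> 's list \<Rightarrow> bool" where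
  "oca_accepts \<delta> bd emb F w = (oca_run \<delta> bd emb w (length w - 1) (length w) \<in> F)"

definition Trellis :: "'s list set set" where
  "Trellis = {L. \<exists>(Qs :: nat set) F \<delta> bd (emb :: 's \<Rightarrow> nat).
      finite Qs \<and> F \<subseteq> Qs \<and> bd \<in> Qs \<and> inj emb \<and> range emb \<subseteq> Qs \<and>
      (\<forall>p \<in> Qs. \<forall>q \<in> Qs. \<delta> p q \<in> Qs) \<and>
      L \<subseteq> {w. w \<noteq> []} \<and>
      (\<forall>w. w \<noteq> [] \<longrightarrow> (w \<in> L \<longleftrightarrow> oca_accepts \<delta> bd emb F w))}"

end

theory Submission
  imports Defs
begin

lemma trellis_intro:
  fixes g :: "'s list \<Rightarrow> 'b" and P :: "'b \<Rightarrow> bool"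
  assumes fin: "finite (g ` {w. w \<noteq> []})"
    and cong: "\<And>u v. 2 \<le> length u \<Longrightarrow> 2 \<le> length v \<Longrightarrow> g (butlast u) = g (butlast v)
                 \<Longrightarrow> g (tl u) = g (tl v) \<Longrightarrow> g u = g v"
    and inj1: "\<And>a b. g [a] = g [b] \<Longrightarrow> a = b"
  shows "{w. w \<noteq> [] \<and> P (g w)} \<in> Trellis"
proof -
  define G where "G = g ` {w. w \<noteq> []}"
  obtain enc :: "'b \<Rightarrow> nat" and m where encG: "enc ` G = {i. i < m}" and inj: "inj_on enc G"
    using finite_imp_inj_to_nat_seg[OF fin] unfolding G_def by blast
  have inG: "w \<noteq> [] \<Longrightarrow> g w \<in> G" for w unfolding G_def by blast
  define Qs where "Qs = insert 0 (enc ` G)"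
  define Pr where "Pr p q u = (2 \<le> length u \<and> enc (g (butlast u)) = p \<and> enc (g (tl u)) = q)" for p q u
  define \<delta> where "\<delta> p q = (if \<exists>u. Pr p q u then enc (g (SOME u. Pr p q u)) else 0)" for p q
  define emb where "emb a = enc (g [a])" for a
  define F where "F = enc ` {x \<in> G. P x}"
  have key: "\<delta> (enc (g (butlast u))) (enc (g (tl u))) = enc (g u)" if u: "2 \<le> length u" for u
  proof -
    let ?p = "enc (g (butlast u))" and ?q = "enc (g (tl u))"
    have ex: "Pr ?p ?q u" using u unfolding Pr_def by simp
    define u' where "u' = (SOME u. Pr ?p ?q u)"
    have "Pr ?p ?q u'" unfolding u'_def by (rule someI, rule ex)
    then have l: "2 \<le> length u'" and e1: "enc (g (butlast u')) = ?p" and e2: "enc (g (tl u')) = ?q"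
      unfolding Pr_def by auto
    have ne: "butlast u \<noteq> []" "tl u \<noteq> []" "butlast u' \<noteq> []" "tl u' \<noteq> []" using u l
      by (cases u; cases u'; auto)+
    have "g (butlast u') = g (butlast u)" using inj_onD[OF inj e1] inG ne by blast
    moreover have "g (tl u') = g (tl u)" using inj_onD[OF inj e2] inG ne by blast
    ultimately have "g u' = g u" using cong[OF l u] by blast
    then show ?thesis using ex unfolding \<delta>_def u'_def by auto
  qed
  have run: "oca_run \<delta> 0 emb w t c = enc (g (take (Suc t) (drop (c - Suc t) w)))"
    if "t < c" "c \<le> length w" for w t c
    using that
  proof (induction t arbitrary: c)
    case 0
    then have "take (Suc 0) (drop (c - Suc 0) w) = [w ! (c - 1)]"
      by (simp add: take_Suc_conv_app_nth)
    then show ?case by (simp add: emb_def)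
  next
    case (Suc t)
    let ?u = "take (Suc (Suc t)) (drop (c - Suc (Suc t)) w)"
    have l: "2 \<le> length ?u" using Suc.prems by simp
    have b: "butlast ?u = take (Suc t) (drop (c - 1 - Suc t) w)"
      using Suc.prems by (simp add: butlast_take)
    have t: "tl ?u = take (Suc t) (drop (c - Suc t) w)"
    proof -
      have e: "c - Suc t = Suc (c - Suc (Suc t))" using Suc.prems by arith
      show ?thesis by (simp add: tl_take tl_drop e drop_Suc)
    qed
    have "oca_run \<delta> 0 emb w (Suc t) c = \<delta> (oca_run \<delta> 0 emb w t (c - 1)) (oca_run \<delta> 0 emb w t c)"
      using Suc.prems by simp
    also have "\<dots> = \<delta> (enc (g (butlast ?u))) (enc (g (tl ?u)))"
      using Suc.IH[of "c - 1"] Suc.IH[of c] Suc.prems b t by simp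
    also have "\<dots> = enc (g ?u)" by (rule key[OF l])
    finally show ?case .
  qed
  show ?thesis unfolding Trellis_def
  proof (intro CollectI exI conjI)
    show "finite Qs" using encG unfolding Qs_def by simp
    show "F \<subseteq> Qs" unfolding F_def Qs_def by auto
    show "0 \<in> Qs" unfolding Qs_def by simp
    show "inj emb" unfolding emb_def inj_def using inj_onD[OF inj] inG inj1 by blast
    show "range emb \<subseteq> Qs" unfolding emb_def Qs_def using inG by blast
    show "\<forall>p\<in>Qs. \<forall>q\<in>Qs. \<delta> p q \<in> Qs"
    proof (intro ballI)
      fix p q
      show "\<delta> p q \<in> Qs"
      proof (cases "\<exists>u. Pr p q u")
        case True
        then have "Pr p q (SOME u. Pr p q u)" by (rule someI_ex)
        then have "(SOME u. Pr p q u) \<noteq> []" unfolding Pr_def by auto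
        then show ?thesis using True inG unfolding \<delta>_def Qs_def by auto
      qed (simp add: \<delta>_def Qs_def)
    qed
    show "{w. w \<noteq> [] \<and> P (g w)} \<subseteq> {w. w \<noteq> []}" by auto
    show "\<forall>w. w \<noteq> [] \<longrightarrow> (w \<in> {w. w \<noteq> [] \<and> P (g w)}) = oca_accepts \<delta> 0 emb F w"
    proof (intro allI impI)
      fix w :: "'s list" assume w: "w \<noteq> []"
      have "oca_run \<delta> 0 emb w (length w - 1) (length w) = enc (g w)"
        using run[of "length w - 1" "length w" w] w by simp
      moreover have "enc (g w) \<in> F \<longleftrightarrow> P (g w)"
        unfolding F_def using inj_onD[OF inj] inG[OF w] by blast
      ultimately show "(w \<in> {w. w \<noteq> [] \<and> P (g w)}) = oca_accepts \<delta> 0 emb F w"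
        using w unfolding oca_accepts_def by simp
    qed
  qed
qed

lemma hyp_holds_mono[mono]:
  "(\<And>a b c. I a b c \<longrightarrow> J a b c) \<Longrightarrow> hyp_holds w I x y h \<longrightarrow> hyp_holds w J x y h"
  by (cases h) auto

inductive der :: "'s horn_formula \<Rightarrow> 's list \<Rightarrow> nat \<Rightarrow> nat \<Rightarrow> nat \<Rightarrow> bool" for \<Phi> w where
  derI: "(hs, Some R) \<in> set \<Phi> \<Longrightarrow> 1 \<le> x \<Longrightarrow> x \<le> y \<Longrightarrow> y \<le> length w \<Longrightarrow>
    \<forall>h\<in>set hs. hyp_holds w (der \<Phi> w) x y h \<Longrightarrow> der \<Phi> w R x y"

definition fires :: "'s horn_formula \<Rightarrow> 's list \<Rightarrow> nat \<Rightarrow> nat \<Rightarrow> bool" where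
  "fires \<Phi> w x y = (\<exists>hs. (hs, None) \<in> set \<Phi> \<and> 1 \<le> x \<and> x \<le> y \<and> y \<le> length w \<and>
      (\<forall>h\<in>set hs. hyp_holds w (der \<Phi> w) x y h))"

lemma horn_sat_iff: "horn_sat \<Phi> w \<longleftrightarrow> \<not> (\<exists>x y. fires \<Phi> w x y)"
proof
  assume "horn_sat \<Phi> w"
  then obtain I where I: "\<forall>x\<in>{1..length w}. \<forall>y\<in>{1..length w}. \<forall>cl\<in>set \<Phi>. clause_holds w I x y cl"
    by (auto simp: horn_sat_def)
  have dI: "I R x y" if "der \<Phi> w R x y" for R x y
    using that
  proof (induction rule: der.induct)
    case (derI hs R x y)
    have m: "hyp_holds w I x y h" if "hyp_holds w (\<lambda>a b c. der \<Phi> w a b c \<and> I a b c) x y h" for h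
      by (rule hyp_holds_mono[rule_format, OF _ that]) simp
    have "\<forall>h\<in>set hs. hyp_holds w I x y h" using derI.IH m by blast
    moreover have "clause_holds w I x y (hs, Some R)"
      using I derI.hyps(1-4) by simp
    ultimately show ?case using derI.hyps(3) unfolding clause_holds_def by simp
  qed
  show "\<not> (\<exists>x y. fires \<Phi> w x y)"
  proof
    assume "\<exists>x y. fires \<Phi> w x y"
    then obtain x y hs where f: "(hs, None) \<in> set \<Phi>" "1 \<le> x" "x \<le> y" "y \<le> length w"
      "\<forall>h\<in>set hs. hyp_holds w (der \<Phi> w) x y h" unfolding fires_def by blast
    have m: "hyp_holds w I x y h" if "hyp_holds w (der \<Phi> w) x y h" for h
      by (rule hyp_holds_mono[rule_format, OF _ that]) (simp add: dI)
    have "\<forall>h\<in>set hs. hyp_holds w I x y h" using f(5) m by blast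
    moreover have "clause_holds w I x y (hs, None)"
      using I f(1-4) by simp
    ultimately show False using f(3) unfolding clause_holds_def by simp
  qed
next
  assume nf: "\<not> (\<exists>x y. fires \<Phi> w x y)"
  show "horn_sat \<Phi> w" unfolding horn_sat_def
  proof (intro exI ballI)
    fix x y cl assume x: "x \<in> {1..length w}" and y: "y \<in> {1..length w}" and cl: "cl \<in> set \<Phi>"
    obtain hs hd where c: "cl = (hs, hd)" by fastforce
    show "clause_holds w (der \<Phi> w) x y cl"
    proof (cases hd)
      case None
      then show ?thesis using nf x y cl c unfolding clause_holds_def fires_def by auto
    next
      case (Some R)
      then show ?thesis using x y cl c derI[of hs R \<Phi> x y w] unfolding clause_holds_def by auto
    qed
  qed
qed

lemma suc_pow: "x \<le> n \<Longrightarrow> (suc_w n ^^ k) x = min (x + k) n"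
  by (induction k) (auto simp: suc_w_def)

lemma pred_pow: "1 \<le> x \<Longrightarrow> (pred_w ^^ k) x = max (x - k) 1"
  by (induction k) (auto simp: pred_w_def max_def)

lemma shift_eq: "1 \<le> x \<Longrightarrow> x \<le> n \<Longrightarrow>
  shift n x a = (if 0 \<le> a then min (x + nat a) n else max (x - nat (- a)) 1)"
  by (simp add: shift_def suc_pow pred_pow)

lemma backw_eq: "1 \<le> y \<Longrightarrow> backw y b = max (y - b) 1"
  by (simp add: backw_def pred_pow)

fun hyp_off :: "'s hyp \<Rightarrow> nat" where
  "hyp_off (UX U a p) = nat \<bar>a\<bar>"
| "hyp_off (UY U a p) = nat \<bar>a\<bar>"
| "hyp_off XeqY = 0"
| "hyp_off XltY = 0"
| "hyp_off (RelH S a b) = max a b"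

definition K0 :: "'s horn_formula \<Rightarrow> nat" where
  "K0 \<Phi> = Max (insert 0 (hyp_off ` (\<Union>cl\<in>set \<Phi>. set (fst cl))))"

lemma K0_ge: "(hs, hd0) \<in> set \<Phi> \<Longrightarrow> h \<in> set hs \<Longrightarrow> hyp_off h \<le> K0 \<Phi>"
  unfolding K0_def by (rule Max_ge) force+

lemma hyp_transfer:
  assumes off: "hyp_off h \<le> k"
    and px: "\<And>U a. \<bar>a\<bar> \<le> int k \<Longrightarrow>
        upred_holds w1 U (shift (length w1) x1 a) = upred_holds w2 U (shift (length w2) x2 a)"
    and py: "\<And>U a. \<bar>a\<bar> \<le> int k \<Longrightarrow>
        upred_holds w1 U (shift (length w1) y1 a) = upred_holds w2 U (shift (length w2) y2 a)"
    and lt: "x1 < y1 \<longleftrightarrow> x2 < y2" and eq: "x1 = y1 \<longleftrightarrow> x2 = y2"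
    and rel: "\<And>S a b. a \<le> k \<Longrightarrow> b \<le> k \<Longrightarrow> I1 S (shift (length w1) x1 (int a)) (backw y1 b) \<Longrightarrow>
        shift (length w1) x1 (int a) \<le> backw y1 b \<Longrightarrow>
        I2 S (shift (length w2) x2 (int a)) (backw y2 b) \<and> shift (length w2) x2 (int a) \<le> backw y2 b"
    and hh: "hyp_holds w1 I1 x1 y1 h"
  shows "hyp_holds w2 I2 x2 y2 h"
proof (cases h)
  case (UX U a p)
  then have "\<bar>a\<bar> \<le> int k" using off by simp
  then show ?thesis using hh px[of a U] UX by simp
next
  case (UY U a p)
  then have "\<bar>a\<bar> \<le> int k" using off by simp
  then show ?thesis using hh py[of a U] UY by simp
next
  case (RelH S a b)
  then show ?thesis using hh rel[of a b S] off by simp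
next
  case XeqY then show ?thesis using hh eq by simp
next
  case XltY then show ?thesis using hh lt by simp
qed

lemma der_transfer:
  assumes d: "der \<Phi> w1 R x1 y1" and b: "B x1 y1 x2 y2"
    and step: "\<And>hs R x1 y1 x2 y2. (hs, Some R) \<in> set \<Phi> \<Longrightarrow> 1 \<le> x1 \<Longrightarrow> x1 \<le> y1 \<Longrightarrow>
      y1 \<le> length w1 \<Longrightarrow> B x1 y1 x2 y2 \<Longrightarrow>
      \<forall>h\<in>set hs. hyp_holds w1 (\<lambda>S x y. der \<Phi> w1 S x y \<and> (\<forall>x' y'. B x y x' y' \<longrightarrow> der \<Phi> w2 S x' y')) x1 y1 h \<Longrightarrow>
      1 \<le> x2 \<and> x2 \<le> y2 \<and> y2 \<le> length w2 \<and> (\<forall>h\<in>set hs. hyp_holds w2 (der \<Phi> w2) x2 y2 h)"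
  shows "der \<Phi> w2 R x2 y2"
  using d b
proof (induction arbitrary: x2 y2 rule: der.induct)
  case (derI hs R x y)
  have "1 \<le> x2 \<and> x2 \<le> y2 \<and> y2 \<le> length w2 \<and> (\<forall>h\<in>set hs. hyp_holds w2 (der \<Phi> w2) x2 y2 h)"
    by (rule step[OF derI.hyps(1-4) derI.prems]) (use derI.IH in simp)
  then show ?case using derI.hyps(1) der.derI by blast
qed


lemma pos_upred:
  assumes "1 \<le> j" "j \<le> length v" "p \<noteq> [] \<longrightarrow> 2 \<le> j" "q \<noteq> [] \<longrightarrow> j < length v"
  shows "upred_holds (p @ v @ q) U (j + length p) = upred_holds v U j"
proof (cases U)
  case (Q s)
  have e: "j + length p - 1 = length p + (j - 1)" using assms by simp
  have "(p @ v @ q) ! (length p + (j - 1)) = (v @ q) ! (j - 1)" by (rule nth_append_length_plus)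
  also have "\<dots> = v ! (j - 1)"
  proof -
    have "j - 1 < length v" using assms by simp
    then show ?thesis by (simp add: nth_append)
  qed
  finally have "(p @ v @ q) ! (j + length p - 1) = v ! (j - 1)" unfolding e .
  then show ?thesis using Q by simp
next
  case MinP then show ?thesis using assms by (cases p) auto
next
  case MaxP then show ?thesis using assms by (cases q) auto
qed

lemma shift_loc:
  assumes z: "1 \<le> z" "z \<le> length v" "p \<noteq> [] \<longrightarrow> k + 2 \<le> z" "q \<noteq> [] \<longrightarrow> z + k + 1 \<le> length v"
    and a: "\<bar>a\<bar> \<le> int k"
  shows "shift (length (p @ v @ q)) (z + length p) a = shift (length v) z a + length p \<and>
    1 \<le> shift (length v) z a \<and> shift (length v) z a \<le> length v \<and>
    (p \<noteq> [] \<longrightarrow> 2 \<le> shift (length v) z a) \<and> (q \<noteq> [] \<longrightarrow> shift (length v) z a < length v)"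
proof -
  have s1: "shift (length (p @ v @ q)) (z + length p) a =
    (if 0 \<le> a then min (z + length p + nat a) (length p + length v + length q) else max (z + length p - nat (- a)) 1)"
    using z by (subst shift_eq) auto
  have s2: "shift (length v) z a = (if 0 \<le> a then min (z + nat a) (length v) else max (z - nat (- a)) 1)"
    using z by (subst shift_eq) auto
  have na: "0 \<le> a \<Longrightarrow> nat a \<le> k" "a < 0 \<Longrightarrow> nat (- a) \<le> k" using a by auto
  show ?thesis
  proof (cases "0 \<le> a")
    case True
    then show ?thesis unfolding s1 s2 using na(1)[OF True] z by (cases "q = []"; cases "p = []"; simp)
  next
    case False
    then show ?thesis unfolding s1 s2 using na(2) z by (cases "q = []"; cases "p = []"; simp; arith)
  qed
qed

lemma backw_loc:
  assumes "1 \<le> y" "p \<noteq> [] \<longrightarrow> k + 2 \<le> y" "b \<le> k"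
  shows "backw (y + length p) b = backw y b + length p"
  using assms by (cases "p = []") (auto simp: backw_eq)

lemma shift_ge: "1 \<le> x \<Longrightarrow> x \<le> n \<Longrightarrow> x \<le> shift n x (int a) \<and> shift n x (int a) \<le> n"
  by (simp add: shift_eq)

lemma backw_le: "1 \<le> y \<Longrightarrow> backw y b \<le> y \<and> 1 \<le> backw y b"
  by (simp add: backw_eq)

definition cnd :: "nat \<Rightarrow> 's list \<Rightarrow> 's list \<Rightarrow> 's list \<Rightarrow> nat \<Rightarrow> nat \<Rightarrow> bool" where
  "cnd k p q v x y = (1 \<le> x \<and> x \<le> y \<and> y \<le> length v \<and> (p = [] \<or> k + 1 < x) \<and> (q = [] \<or> y + k + 1 \<le> length v))"

lemma prof_loc:
  assumes c: "cnd k p q v x y"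
  shows "\<And>U a. \<bar>a\<bar> \<le> int k \<Longrightarrow> upred_holds (p @ v @ q) U (shift (length (p @ v @ q)) (x + length p) a)
            = upred_holds v U (shift (length v) x a)"
    and "\<And>U a. \<bar>a\<bar> \<le> int k \<Longrightarrow> upred_holds (p @ v @ q) U (shift (length (p @ v @ q)) (y + length p) a)
            = upred_holds v U (shift (length v) y a)"
    and "\<And>a. a \<le> k \<Longrightarrow> shift (length (p @ v @ q)) (x + length p) (int a) = shift (length v) x (int a) + length p"
    and "\<And>b. b \<le> k \<Longrightarrow> backw (y + length p) b = backw y b + length p"
    and "\<And>a b. cnd k p q v (shift (length v) x (int a)) (backw y b) \<longleftrightarrow> shift (length v) x (int a) \<le> backw y b"
    and "\<And>a b. x \<le> shift (length v) x (int a)" "\<And>b. backw y b \<le> y"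
proof -
  have zx: "1 \<le> x" "x \<le> length v" "p \<noteq> [] \<longrightarrow> k + 2 \<le> x" "q \<noteq> [] \<longrightarrow> x + k + 1 \<le> length v"
    using c unfolding cnd_def by auto
  have zy: "1 \<le> y" "y \<le> length v" "p \<noteq> [] \<longrightarrow> k + 2 \<le> y" "q \<noteq> [] \<longrightarrow> y + k + 1 \<le> length v"
    using c unfolding cnd_def by auto
  show "\<And>U a. \<bar>a\<bar> \<le> int k \<Longrightarrow> upred_holds (p @ v @ q) U (shift (length (p @ v @ q)) (x + length p) a)
            = upred_holds v U (shift (length v) x a)"
    using shift_loc[OF zx] pos_upred by (metis (no_types, lifting))
  show "\<And>U a. \<bar>a\<bar> \<le> int k \<Longrightarrow> upred_holds (p @ v @ q) U (shift (length (p @ v @ q)) (y + length p) a)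
            = upred_holds v U (shift (length v) y a)"
    using shift_loc[OF zy] pos_upred by (metis (no_types, lifting))
  show "\<And>a. a \<le> k \<Longrightarrow> shift (length (p @ v @ q)) (x + length p) (int a) = shift (length v) x (int a) + length p"
    using shift_loc[OF zx] by simp
  show "\<And>b. b \<le> k \<Longrightarrow> backw (y + length p) b = backw y b + length p"
    using backw_loc zy by blast
  show "\<And>a. x \<le> shift (length v) x (int a)" using shift_ge zx by blast
  show "\<And>b. backw y b \<le> y" using backw_le zy by blast
  show "\<And>a b. cnd k p q v (shift (length v) x (int a)) (backw y b) \<longleftrightarrow> shift (length v) x (int a) \<le> backw y b"
  proof -
    fix a b
    have "x \<le> shift (length v) x (int a)" using shift_ge zx by blast
    moreover have "backw y b \<le> y" using backw_le zy by blast
    ultimately show "cnd k p q v (shift (length v) x (int a)) (backw y b) \<longleftrightarrow> shift (length v) x (int a) \<le> backw y b"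
      using c unfolding cnd_def by auto
  qed
qed

lemma hyp_loc1:
  assumes c: "cnd k p q v x y" and off: "hyp_off h \<le> k"
    and r: "\<And>S x' y'. cnd k p q v x' y' \<Longrightarrow> I1 S (x' + length p) (y' + length p) \<Longrightarrow> I2 S x' y'"
    and hh: "hyp_holds (p @ v @ q) I1 (x + length p) (y + length p) h"
  shows "hyp_holds v I2 x y h"
proof (rule hyp_transfer[OF off _ _ _ _ _ hh])
  show "\<And>U a. \<bar>a\<bar> \<le> int k \<Longrightarrow> upred_holds (p @ v @ q) U (shift (length (p @ v @ q)) (x + length p) a)
            = upred_holds v U (shift (length v) x a)" by (rule prof_loc(1)[OF c])
  show "\<And>U a. \<bar>a\<bar> \<le> int k \<Longrightarrow> upred_holds (p @ v @ q) U (shift (length (p @ v @ q)) (y + length p) a)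
            = upred_holds v U (shift (length v) y a)" by (rule prof_loc(2)[OF c])
  show "(x + length p < y + length p) = (x < y)" by simp
  show "(x + length p = y + length p) = (x = y)" by simp
  fix S a b assume ab: "a \<le> k" "b \<le> k"
    and i1: "I1 S (shift (length (p @ v @ q)) (x + length p) (int a)) (backw (y + length p) b)"
    and le: "shift (length (p @ v @ q)) (x + length p) (int a) \<le> backw (y + length p) b"
  note e = prof_loc(3)[OF c ab(1)] prof_loc(4)[OF c ab(2)]
  have le': "shift (length v) x (int a) \<le> backw y b" using le unfolding e by simp
  then have "cnd k p q v (shift (length v) x (int a)) (backw y b)" using prof_loc(5)[OF c] by blast
  then show "I2 S (shift (length v) x (int a)) (backw y b) \<and> shift (length v) x (int a) \<le> backw y b"
    using r i1 le' unfolding e by blast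
qed

lemma hyp_loc2:
  assumes c: "cnd k p q v x y" and off: "hyp_off h \<le> k"
    and r: "\<And>S x' y'. cnd k p q v x' y' \<Longrightarrow> I2 S x' y' \<Longrightarrow> I1 S (x' + length p) (y' + length p)"
    and hh: "hyp_holds v I2 x y h"
  shows "hyp_holds (p @ v @ q) I1 (x + length p) (y + length p) h"
proof (rule hyp_transfer[OF off _ _ _ _ _ hh])
  show "\<And>U a. \<bar>a\<bar> \<le> int k \<Longrightarrow> upred_holds v U (shift (length v) x a) =
     upred_holds (p @ v @ q) U (shift (length (p @ v @ q)) (x + length p) a)"
    using prof_loc(1)[OF c] by simp
  show "\<And>U a. \<bar>a\<bar> \<le> int k \<Longrightarrow> upred_holds v U (shift (length v) y a) =
     upred_holds (p @ v @ q) U (shift (length (p @ v @ q)) (y + length p) a)"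
    using prof_loc(2)[OF c] by simp
  show "(x < y) = (x + length p < y + length p)" by simp
  show "(x = y) = (x + length p = y + length p)" by simp
  fix S a b assume ab: "a \<le> k" "b \<le> k"
    and i1: "I2 S (shift (length v) x (int a)) (backw y b)"
    and le: "shift (length v) x (int a) \<le> backw y b"
  note e = prof_loc(3)[OF c ab(1)] prof_loc(4)[OF c ab(2)]
  have "cnd k p q v (shift (length v) x (int a)) (backw y b)" using prof_loc(5)[OF c] le by blast
  then show "I1 S (shift (length (p @ v @ q)) (x + length p) (int a)) (backw (y + length p) b) \<and>
    shift (length (p @ v @ q)) (x + length p) (int a) \<le> backw (y + length p) b"
    using r i1 le unfolding e by simp
qed

lemma der_loc1:
  assumes c: "cnd (K0 \<Phi>) p q v x y" and d: "der \<Phi> (p @ v @ q) R (x + length p) (y + length p)"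
  shows "der \<Phi> v R x y"
proof -
  define B where "B = (\<lambda>x1 y1 x2 y2. x1 = x2 + length p \<and> y1 = y2 + length p \<and> cnd (K0 \<Phi>) p q v x2 y2)"
  have b: "B (x + length p) (y + length p) x y" using c unfolding B_def by simp
  have step: "1 \<le> x2 \<and> x2 \<le> y2 \<and> y2 \<le> length v \<and> (\<forall>h\<in>set hs. hyp_holds v (der \<Phi> v) x2 y2 h)"
    if cl: "(hs, Some R) \<in> set \<Phi>" and bb: "B x1 y1 x2 y2"
      and hh: "\<forall>h\<in>set hs. hyp_holds (p @ v @ q) (\<lambda>S x y. der \<Phi> (p @ v @ q) S x y \<and>
          (\<forall>x' y'. B x y x' y' \<longrightarrow> der \<Phi> v S x' y')) x1 y1 h" for hs R x1 y1 x2 y2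
  proof -
    have c2: "cnd (K0 \<Phi>) p q v x2 y2" and e: "x1 = x2 + length p" "y1 = y2 + length p" using bb unfolding B_def by auto
    have "hyp_holds v (der \<Phi> v) x2 y2 h" if h: "h \<in> set hs" for h
    proof (rule hyp_loc1[OF c2 K0_ge[OF cl h]])
      show "hyp_holds (p @ v @ q) (\<lambda>S x y. der \<Phi> (p @ v @ q) S x y \<and>
          (\<forall>x' y'. B x y x' y' \<longrightarrow> der \<Phi> v S x' y')) (x2 + length p) (y2 + length p) h"
        using hh h e by simp
      show "\<And>S x' y'. cnd (K0 \<Phi>) p q v x' y' \<Longrightarrow> der \<Phi> (p @ v @ q) S (x' + length p) (y' + length p) \<and>
          (\<forall>x'a y'a. B (x' + length p) (y' + length p) x'a y'a \<longrightarrow> der \<Phi> v S x'a y'a) \<Longrightarrow> der \<Phi> v S x' y'"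
        unfolding B_def by auto
    qed
    then show ?thesis using c2 unfolding cnd_def by auto
  qed
  show ?thesis by (rule der_transfer[where B = B, OF d b step]) 
qed


lemma der_loc2:
  assumes c: "cnd (K0 \<Phi>) p q v x y" and d: "der \<Phi> v R x y"
  shows "der \<Phi> (p @ v @ q) R (x + length p) (y + length p)"
proof -
  define B where "B = (\<lambda>x1 y1 x2 y2. x2 = x1 + length p \<and> y2 = y1 + length p \<and> cnd (K0 \<Phi>) p q v x1 y1)"
  have b: "B x y (x + length p) (y + length p)" using c unfolding B_def by simp
  have step: "1 \<le> x2 \<and> x2 \<le> y2 \<and> y2 \<le> length (p @ v @ q) \<and>
      (\<forall>h\<in>set hs. hyp_holds (p @ v @ q) (der \<Phi> (p @ v @ q)) x2 y2 h)"
    if cl: "(hs, Some R) \<in> set \<Phi>" and bb: "B x1 y1 x2 y2"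
      and hh: "\<forall>h\<in>set hs. hyp_holds v (\<lambda>S x y. der \<Phi> v S x y \<and>
          (\<forall>x' y'. B x y x' y' \<longrightarrow> der \<Phi> (p @ v @ q) S x' y')) x1 y1 h" for hs R x1 y1 x2 y2
  proof -
    have c1: "cnd (K0 \<Phi>) p q v x1 y1" and e: "x2 = x1 + length p" "y2 = y1 + length p"
      using bb unfolding B_def by auto
    have "hyp_holds (p @ v @ q) (der \<Phi> (p @ v @ q)) (x1 + length p) (y1 + length p) h" if h: "h \<in> set hs" for h
    proof (rule hyp_loc2[OF c1 K0_ge[OF cl h]])
      show "hyp_holds v (\<lambda>S x y. der \<Phi> v S x y \<and>
          (\<forall>x' y'. B x y x' y' \<longrightarrow> der \<Phi> (p @ v @ q) S x' y')) x1 y1 h"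
        using hh h by simp
      show "\<And>S x' y'. cnd (K0 \<Phi>) p q v x' y' \<Longrightarrow> der \<Phi> v S x' y' \<and>
          (\<forall>x'a y'a. B x' y' x'a y'a \<longrightarrow> der \<Phi> (p @ v @ q) S x'a y'a) \<Longrightarrow>
          der \<Phi> (p @ v @ q) S (x' + length p) (y' + length p)"
        unfolding B_def by auto
    qed
    then show ?thesis using c1 e unfolding cnd_def by auto
  qed
  show ?thesis by (rule der_transfer[where B = B, OF d b step])
qed

lemma der_loc:
  assumes c: "cnd (K0 \<Phi>) p q v x y"
  shows "der \<Phi> (p @ v @ q) R (x + length p) (y + length p) \<longleftrightarrow> der \<Phi> v R x y"
  using der_loc1[OF c] der_loc2[OF c] by blast

lemma fires_loc:
  assumes c: "cnd (K0 \<Phi>) p q v x y"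
  shows "fires \<Phi> (p @ v @ q) (x + length p) (y + length p) \<longleftrightarrow> fires \<Phi> v x y"
proof -
  have r1: "\<And>S x' y'. cnd (K0 \<Phi>) p q v x' y' \<Longrightarrow> der \<Phi> (p @ v @ q) S (x' + length p) (y' + length p) \<Longrightarrow> der \<Phi> v S x' y'"
    using der_loc1 by blast
  have r2: "\<And>S x' y'. cnd (K0 \<Phi>) p q v x' y' \<Longrightarrow> der \<Phi> v S x' y' \<Longrightarrow> der \<Phi> (p @ v @ q) S (x' + length p) (y' + length p)"
    using der_loc2 by blast
  have n: "1 \<le> x + length p \<and> x + length p \<le> y + length p \<and> y + length p \<le> length (p @ v @ q)"
    "1 \<le> x \<and> x \<le> y \<and> y \<le> length v" using c unfolding cnd_def by auto
  show ?thesis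
  proof
    assume "fires \<Phi> (p @ v @ q) (x + length p) (y + length p)"
    then obtain hs where cl: "(hs, None) \<in> set \<Phi>"
      and hh: "\<forall>h\<in>set hs. hyp_holds (p @ v @ q) (der \<Phi> (p @ v @ q)) (x + length p) (y + length p) h"
      unfolding fires_def by blast
    have "hyp_holds v (der \<Phi> v) x y h" if h: "h \<in> set hs" for h
      using hyp_loc1[of "K0 \<Phi>" p q v x y h "der \<Phi> (p @ v @ q)" "der \<Phi> v"] c K0_ge[OF cl h] r1 bspec[OF hh h] by blast
    then show "fires \<Phi> v x y" unfolding fires_def using cl n by blast
  next
    assume "fires \<Phi> v x y"
    then obtain hs where cl: "(hs, None) \<in> set \<Phi>"
      and hh: "\<forall>h\<in>set hs. hyp_holds v (der \<Phi> v) x y h"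
      unfolding fires_def by blast
    have "hyp_holds (p @ v @ q) (der \<Phi> (p @ v @ q)) (x + length p) (y + length p) h" if h: "h \<in> set hs" for h
      using hyp_loc2[of "K0 \<Phi>" p q v x y h "der \<Phi> v" "der \<Phi> (p @ v @ q)"] c K0_ge[OF cl h] r2 bspec[OF hh h] by blast
    then show "fires \<Phi> (p @ v @ q) (x + length p) (y + length p)" unfolding fires_def using cl n by blast
  qed
qed

lemma upred_eqI:
  assumes "j = 1 \<longleftrightarrow> j' = 1" "j = length w \<longleftrightarrow> j' = length w'" "w ! (j - 1) = w' ! (j' - 1)"
  shows "upred_holds w U j = upred_holds w' U j'"
  using assms by (cases U) auto

lemma take_nth_eq: "take N u = take N v \<Longrightarrow> i < N \<Longrightarrow> i < length u \<Longrightarrow> i < length v \<Longrightarrow> u ! i = v ! i"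
  by (metis nth_take)

lemma nth_lur_mid: "m < length l + length u \<Longrightarrow> length l \<le> m \<Longrightarrow> (l @ u @ r) ! m = u ! (m - length l)"
proof -
  assume a: "m < length l + length u" "length l \<le> m"
  have "(l @ u @ r) ! m = (u @ r) ! (m - length l)" using a by (intro nth_append_right) simp
  also have "\<dots> = u ! (m - length l)" using a by (intro nth_append_left) simp
  finally show ?thesis .
qed

lemma nth_lur_left: "m < length l \<Longrightarrow> (l @ u @ r) ! m = l ! m"
  by (rule nth_append_left)

lemma nth_lur_right: "length l + length u \<le> m \<Longrightarrow> (l @ u @ r) ! m = r ! (m - length l - length u)"
proof -
  assume a: "length l + length u \<le> m"
  have "(l @ u @ r) ! m = (u @ r) ! (m - length l)" using a by (intro nth_append_right) simp
  also have "\<dots> = r ! (m - length l - length u)" using a by (subst nth_append_right) auto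
  finally show ?thesis .
qed

lemma prof_whole:
  fixes l u v r :: "'s list" and k :: nat
  assumes lu: "2*k+2 \<le> length u" and lv: "2*k+2 \<le> length v"
    and tu: "take (2*k+2) u = take (2*k+2) v" and tr: "take (2*k+2) (rev u) = take (2*k+2) (rev v)"
  shows "\<bar>a\<bar> \<le> int k \<Longrightarrow> upred_holds (l@u@r) U (shift (length (l@u@r)) (length l + 1) a) =
           upred_holds (l@v@r) U (shift (length (l@v@r)) (length l + 1) a)"
    and "\<bar>a\<bar> \<le> int k \<Longrightarrow> upred_holds (l@u@r) U (shift (length (l@u@r)) (length l + length u) a) =
           upred_holds (l@v@r) U (shift (length (l@v@r)) (length l + length v) a)"
    and "a' \<le> k \<Longrightarrow> shift (length (l@u@r)) (length l + 1) (int a') = length l + 1 + a'"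
    and "b \<le> k \<Longrightarrow> backw (length l + length u) b = length l + length u - b"
proof -
  show "a' \<le> k \<Longrightarrow> shift (length (l@u@r)) (length l + 1) (int a') = length l + 1 + a'"
    using lu by (subst shift_eq) auto
  show "b \<le> k \<Longrightarrow> backw (length l + length u) b = length l + length u - b"
    using lu by (subst backw_eq) auto
  assume a: "\<bar>a\<bar> \<le> int k"
  have ru: "rev u ! i = rev v ! i" if "i \<le> k" for i
    using take_nth_eq[OF tr, of i] that lu lv by simp
  have uu: "u ! i = v ! i" if "i \<le> k" for i
    using take_nth_eq[OF tu, of i] that lu lv by simp
  show "upred_holds (l@u@r) U (shift (length (l@u@r)) (length l + 1) a) =
           upred_holds (l@v@r) U (shift (length (l@v@r)) (length l + 1) a)"
  proof (cases "0 \<le> a")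
    case True
    have e1: "shift (length (l@u@r)) (length l + 1) a = length l + 1 + nat a"
      using lu a True by (subst shift_eq) auto
    have e2: "shift (length (l@v@r)) (length l + 1) a = length l + 1 + nat a"
      using lv a True by (subst shift_eq) auto
    have na: "nat a \<le> k" using a True by auto
    show ?thesis unfolding e1 e2
    proof (rule upred_eqI)
      have "(l @ u @ r) ! (length l + nat a) = u ! nat a" using na lu by (subst nth_lur_mid) auto
      moreover have "(l @ v @ r) ! (length l + nat a) = v ! nat a" using na lv by (subst nth_lur_mid) auto
      ultimately show "(l @ u @ r) ! (length l + 1 + nat a - 1) = (l @ v @ r) ! (length l + 1 + nat a - 1)"
        using uu[OF na] by simp
    qed (use na lu lv in auto)
  next
    case False
    define e where "e = nat (- a)"
    have ek: "e \<le> k" "0 < e" using a False unfolding e_def by auto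
    have e1: "shift (length (l@u@r)) (length l + 1) a = max (length l + 1 - e) 1"
      using lu False unfolding e_def by (subst shift_eq) auto
    have e2: "shift (length (l@v@r)) (length l + 1) a = max (length l + 1 - e) 1"
      using lv False unfolding e_def by (subst shift_eq) auto
    show ?thesis unfolding e1 e2
    proof (rule upred_eqI)
      have m: "max (length l + 1 - e) 1 - 1 < length l \<or> (l = [] \<and> max (length l + 1 - e) 1 - 1 = 0)"
        using ek by (cases "l = []") (auto simp: max_def)
      show "(l @ u @ r) ! (max (length l + 1 - e) 1 - 1) = (l @ v @ r) ! (max (length l + 1 - e) 1 - 1)"
      proof (cases "max (length l + 1 - e) 1 - 1 < length l")
        case True then show ?thesis by (simp add: nth_lur_left)
      next
        case False
        then have "l = []" "max (length l + 1 - e) 1 - 1 = 0" using m by auto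
        then show ?thesis using uu[of 0] lu lv by (cases u; cases v) auto
      qed
    qed (use ek lu lv in auto)
  qed
  show "upred_holds (l@u@r) U (shift (length (l@u@r)) (length l + length u) a) =
           upred_holds (l@v@r) U (shift (length (l@v@r)) (length l + length v) a)"
  proof (cases "0 \<le> a")
    case True
    define d where "d = min (nat a) (length r)"
    have e1: "shift (length (l@u@r)) (length l + length u) a = length l + length u + d"
      using lu True unfolding d_def by (subst shift_eq) auto
    have e2: "shift (length (l@v@r)) (length l + length v) a = length l + length v + d"
      using lv True unfolding d_def by (subst shift_eq) auto
    have dr: "d \<le> length r" unfolding d_def by simp
    show ?thesis unfolding e1 e2
    proof (rule upred_eqI)
      show "(length l + length u + d = 1) = (length l + length v + d = 1)" using lu lv by auto
      show "(length l + length u + d = length (l @ u @ r)) = (length l + length v + d = length (l @ v @ r))"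
        by auto
      show "(l @ u @ r) ! (length l + length u + d - 1) = (l @ v @ r) ! (length l + length v + d - 1)"
      proof (cases "d = 0")
        case True
        have "(l @ u @ r) ! (length l + length u - 1) = rev u ! 0"
          using lu by (subst nth_lur_mid, simp, simp) (subst rev_nth, auto)
        moreover have "(l @ v @ r) ! (length l + length v - 1) = rev v ! 0"
          using lv by (subst nth_lur_mid, simp, simp) (subst rev_nth, auto)
        ultimately show ?thesis using True ru[of 0] by simp
      next
        case False
        have "(l @ u @ r) ! (length l + length u + d - 1) = r ! (d - 1)"
          using False by (subst nth_lur_right) auto
        moreover have "(l @ v @ r) ! (length l + length v + d - 1) = r ! (d - 1)"
          using False by (subst nth_lur_right) auto
        ultimately show ?thesis by simp
      qed
    qed
  next
    case False
    define e where "e = nat (- a)"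
    have ek: "e \<le> k" "0 < e" using a False unfolding e_def by auto
    have e1: "shift (length (l@u@r)) (length l + length u) a = length l + length u - e"
      using lu False ek unfolding e_def by (subst shift_eq) auto
    have e2: "shift (length (l@v@r)) (length l + length v) a = length l + length v - e"
      using lv False ek unfolding e_def by (subst shift_eq) auto
    show ?thesis unfolding e1 e2
    proof (rule upred_eqI)
      show "(length l + length u - e = 1) = (length l + length v - e = 1)" using lu lv ek by auto
      show "(length l + length u - e = length (l @ u @ r)) = (length l + length v - e = length (l @ v @ r))"
        using lu lv ek by auto
      have "(l @ u @ r) ! (length l + length u - e - 1) = rev u ! e"
        using lu ek by (subst nth_lur_mid) (auto simp: rev_nth)
      moreover have "(l @ v @ r) ! (length l + length v - e - 1) = rev v ! e"
        using lv ek by (subst nth_lur_mid) (auto simp: rev_nth)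
      ultimately show "(l @ u @ r) ! (length l + length u - e - 1) = (l @ v @ r) ! (length l + length v - e - 1)"
        using ru[OF ek(1)] by simp
    qed
  qed
qed


lemma der_whole1:
  fixes \<Phi> :: "'s horn_formula" and l u v r :: "'s list"
  assumes lu: "2 * K0 \<Phi> + 2 \<le> length u" and lv: "2 * K0 \<Phi> + 2 \<le> length v"
    and tu: "take (2 * K0 \<Phi> + 2) u = take (2 * K0 \<Phi> + 2) v"
    and tr: "take (2 * K0 \<Phi> + 2) (rev u) = take (2 * K0 \<Phi> + 2) (rev v)"
    and A: "\<And>S a b. a \<le> K0 \<Phi> \<Longrightarrow> b \<le> K0 \<Phi> \<Longrightarrow> (a, b) \<noteq> (0, 0) \<Longrightarrow>
       der \<Phi> (l@u@r) S (length l + 1 + a) (length l + length u - b) \<Longrightarrow>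
       der \<Phi> (l@v@r) S (length l + 1 + a) (length l + length v - b)"
    and d: "der \<Phi> (l@u@r) R (length l + 1) (length l + length u)"
  shows "der \<Phi> (l@v@r) R (length l + 1) (length l + length v)"
proof -
  define k where "k = K0 \<Phi>"
  define B where "B = (\<lambda>x1 y1 x2 y2. x1 = length l + 1 \<and> y1 = length l + length u \<and>
      x2 = length l + 1 \<and> y2 = length l + length v)"
  have b: "B (length l + 1) (length l + length u) (length l + 1) (length l + length v)"
    unfolding B_def by simp
  note pu = prof_whole[OF lu lv tu tr]
  note pv = prof_whole[OF lv lu tu[symmetric] tr[symmetric]]
  have step: "1 \<le> x2 \<and> x2 \<le> y2 \<and> y2 \<le> length (l@v@r) \<and> (\<forall>h\<in>set hs. hyp_holds (l@v@r) (der \<Phi> (l@v@r)) x2 y2 h)"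
    if cl: "(hs, Some R) \<in> set \<Phi>" and bb: "B x1 y1 x2 y2"
      and hh: "\<forall>h\<in>set hs. hyp_holds (l@u@r) (\<lambda>S x y. der \<Phi> (l@u@r) S x y \<and>
          (\<forall>x' y'. B x y x' y' \<longrightarrow> der \<Phi> (l@v@r) S x' y')) x1 y1 h" for hs R x1 y1 x2 y2
  proof -
    have e: "x1 = length l + 1" "y1 = length l + length u" "x2 = length l + 1" "y2 = length l + length v"
      using bb unfolding B_def by auto
    have "hyp_holds (l@v@r) (der \<Phi> (l@v@r)) x2 y2 h" if h: "h \<in> set hs" for h
      unfolding e
    proof (rule hyp_transfer[OF K0_ge[OF cl h]])
      show "hyp_holds (l@u@r) (\<lambda>S x y. der \<Phi> (l@u@r) S x y \<and>
          (\<forall>x' y'. B x y x' y' \<longrightarrow> der \<Phi> (l@v@r) S x' y')) (length l + 1) (length l + length u) h"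
        using hh h e by simp
      show "\<And>U a. \<bar>a\<bar> \<le> int (K0 \<Phi>) \<Longrightarrow>
         upred_holds (l @ u @ r) U (shift (length (l @ u @ r)) (length l + 1) a) =
         upred_holds (l @ v @ r) U (shift (length (l @ v @ r)) (length l + 1) a)" by (rule pu(1))
      show "\<And>U a. \<bar>a\<bar> \<le> int (K0 \<Phi>) \<Longrightarrow>
         upred_holds (l @ u @ r) U (shift (length (l @ u @ r)) (length l + length u) a) =
         upred_holds (l @ v @ r) U (shift (length (l @ v @ r)) (length l + length v) a)" by (rule pu(2))
      show "(length l + 1 < length l + length u) = (length l + 1 < length l + length v)" using lu lv by simp
      show "(length l + 1 = length l + length u) = (length l + 1 = length l + length v)" using lu lv by simp
      fix S a b assume ab: "a \<le> K0 \<Phi>" "b \<le> K0 \<Phi>"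
        and i1: "der \<Phi> (l @ u @ r) S (shift (length (l @ u @ r)) (length l + 1) (int a))
           (backw (length l + length u) b) \<and>
          (\<forall>x' y'. B (shift (length (l @ u @ r)) (length l + 1) (int a)) (backw (length l + length u) b) x' y' \<longrightarrow>
             der \<Phi> (l @ v @ r) S x' y')"
      have s: "shift (length (l @ u @ r)) (length l + 1) (int a) = length l + 1 + a"
        "shift (length (l @ v @ r)) (length l + 1) (int a) = length l + 1 + a"
        "backw (length l + length u) b = length l + length u - b"
        "backw (length l + length v) b = length l + length v - b"
        using pu(3)[OF ab(1)] pv(3)[OF ab(1)] pu(4)[OF ab(2)] pv(4)[OF ab(2)] by auto
      have le: "length l + 1 + a \<le> length l + length v - b" using ab lv by simp
      have "der \<Phi> (l @ v @ r) S (length l + 1 + a) (length l + length v - b)"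
      proof (cases "(a, b) = (0, 0)")
        case True
        then show ?thesis using i1 unfolding s B_def by simp
      next
        case False
        then show ?thesis using A[OF ab False] i1 unfolding s by simp
      qed
      then show "der \<Phi> (l @ v @ r) S (shift (length (l @ v @ r)) (length l + 1) (int a)) (backw (length l + length v) b) \<and>
         shift (length (l @ v @ r)) (length l + 1) (int a) \<le> backw (length l + length v) b"
        unfolding s using le by simp
    qed
    then show ?thesis using e lv by auto
  qed
  show ?thesis by (rule der_transfer[where B = B, OF d b step])
qed

lemma fires_whole:
  fixes \<Phi> :: "'s horn_formula" and l u v r :: "'s list"
  assumes lu: "2 * K0 \<Phi> + 2 \<le> length u" and lv: "2 * K0 \<Phi> + 2 \<le> length v"
    and tu: "take (2 * K0 \<Phi> + 2) u = take (2 * K0 \<Phi> + 2) v"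
    and tr: "take (2 * K0 \<Phi> + 2) (rev u) = take (2 * K0 \<Phi> + 2) (rev v)"
    and A: "\<And>S a b. a \<le> K0 \<Phi> \<Longrightarrow> b \<le> K0 \<Phi> \<Longrightarrow>
       der \<Phi> (l@u@r) S (length l + 1 + a) (length l + length u - b) \<Longrightarrow>
       der \<Phi> (l@v@r) S (length l + 1 + a) (length l + length v - b)"
    and f: "fires \<Phi> (l@u@r) (length l + 1) (length l + length u)"
  shows "fires \<Phi> (l@v@r) (length l + 1) (length l + length v)"
proof -
  note pu = prof_whole[OF lu lv tu tr]
  note pv = prof_whole[OF lv lu tu[symmetric] tr[symmetric]]
  obtain hs where cl: "(hs, None) \<in> set \<Phi>"
      and hh: "\<forall>h\<in>set hs. hyp_holds (l@u@r) (der \<Phi> (l@u@r)) (length l + 1) (length l + length u) h"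
    using f unfolding fires_def by blast
  have "hyp_holds (l@v@r) (der \<Phi> (l@v@r)) (length l + 1) (length l + length v) h" if h: "h \<in> set hs" for h
  proof (rule hyp_transfer[OF K0_ge[OF cl h]])
    show "hyp_holds (l@u@r) (der \<Phi> (l@u@r)) (length l + 1) (length l + length u) h"
      using hh h by simp
    show "\<And>U a. \<bar>a\<bar> \<le> int (K0 \<Phi>) \<Longrightarrow>
       upred_holds (l @ u @ r) U (shift (length (l @ u @ r)) (length l + 1) a) =
       upred_holds (l @ v @ r) U (shift (length (l @ v @ r)) (length l + 1) a)" by (rule pu(1))
    show "\<And>U a. \<bar>a\<bar> \<le> int (K0 \<Phi>) \<Longrightarrow>
       upred_holds (l @ u @ r) U (shift (length (l @ u @ r)) (length l + length u) a) =
       upred_holds (l @ v @ r) U (shift (length (l @ v @ r)) (length l + length v) a)" by (rule pu(2))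
    show "(length l + 1 < length l + length u) = (length l + 1 < length l + length v)" using lu lv by simp
    show "(length l + 1 = length l + length u) = (length l + 1 = length l + length v)" using lu lv by simp
    fix S a b assume ab: "a \<le> K0 \<Phi>" "b \<le> K0 \<Phi>"
      and i1: "der \<Phi> (l @ u @ r) S (shift (length (l @ u @ r)) (length l + 1) (int a))
           (backw (length l + length u) b)"
    have s: "shift (length (l @ u @ r)) (length l + 1) (int a) = length l + 1 + a"
      "shift (length (l @ v @ r)) (length l + 1) (int a) = length l + 1 + a"
      "backw (length l + length u) b = length l + length u - b"
      "backw (length l + length v) b = length l + length v - b"
      using pu(3)[OF ab(1)] pv(3)[OF ab(1)] pu(4)[OF ab(2)] pv(4)[OF ab(2)] by auto
    have le: "length l + 1 + a \<le> length l + length v - b" using ab lv by simp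
    show "der \<Phi> (l @ v @ r) S (shift (length (l @ v @ r)) (length l + 1) (int a)) (backw (length l + length v) b) \<and>
       shift (length (l @ v @ r)) (length l + 1) (int a) \<le> backw (length l + length v) b"
      unfolding s using le A[OF ab] i1 unfolding s by simp
  qed
  then show ?thesis unfolding fires_def using cl lv by auto
qed

lemma der_le: "der \<Phi> w R x y \<Longrightarrow> 1 \<le> x \<and> x \<le> y \<and> y \<le> length w"
  by (erule der.cases) auto

lemma fires_le: "fires \<Phi> w x y \<Longrightarrow> 1 \<le> x \<and> x \<le> y \<and> y \<le> length w"
  unfolding fires_def by auto

lemma loc_b:
  fixes \<Phi> :: "'s horn_formula"
  assumes u: "2 \<le> length u" and xy: "1 \<le> x" "x \<le> y" "y \<le> length l + length u - 1"
  shows "der \<Phi> (l@u@r) R x y \<longleftrightarrow> der \<Phi> (l @ butlast u @ take (K0 \<Phi> + 1) (last u # r)) R x y"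
    and "fires \<Phi> (l@u@r) x y \<longleftrightarrow> fires \<Phi> (l @ butlast u @ take (K0 \<Phi> + 1) (last u # r)) x y"
proof -
  define r' where "r' = take (K0 \<Phi> + 1) (last u # r)"
  define q where "q = drop (K0 \<Phi> + 1) (last u # r)"
  define v where "v = l @ butlast u @ r'"
  have une: "u \<noteq> []" using u by auto
  have w: "l @ u @ r = [] @ v @ q"
  proof -
    have "l @ u @ r = l @ butlast u @ (last u # r)"
      using append_butlast_last_id[OF une] by (metis append.assoc append_Cons append_Nil)
    also have "\<dots> = l @ butlast u @ r' @ q" unfolding r'_def q_def by simp
    finally show ?thesis unfolding v_def by simp
  qed
  have c: "cnd (K0 \<Phi>) [] q v x y"
  proof -
    have "q \<noteq> [] \<Longrightarrow> length r' = K0 \<Phi> + 1" unfolding q_def r'_def by auto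
    then show ?thesis unfolding cnd_def v_def using xy une by (cases "q = []") auto
  qed
  show "der \<Phi> (l@u@r) R x y \<longleftrightarrow> der \<Phi> (l @ butlast u @ take (K0 \<Phi> + 1) (last u # r)) R x y"
    using der_loc[OF c, of R] unfolding w by (simp add: v_def r'_def)
  show "fires \<Phi> (l@u@r) x y \<longleftrightarrow> fires \<Phi> (l @ butlast u @ take (K0 \<Phi> + 1) (last u # r)) x y"
    using fires_loc[OF c] unfolding w by (simp add: v_def r'_def)
qed

lemma loc_a:
  fixes \<Phi> :: "'s horn_formula" and l u r :: "'s list"
  defines "m \<equiv> length l + 1 - (K0 \<Phi> + 1)"
  assumes u: "2 \<le> length u" and l: "length l \<le> K0 \<Phi> + 1"
    and xy: "length l + 2 \<le> x" "x \<le> y" "y \<le> length l + length u + length r"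
  shows "der \<Phi> (l@u@r) R x y \<longleftrightarrow> der \<Phi> (drop m (l @ [hd u]) @ tl u @ r) R (x - m) (y - m)"
    and "fires \<Phi> (l@u@r) x y \<longleftrightarrow> fires \<Phi> (drop m (l @ [hd u]) @ tl u @ r) (x - m) (y - m)"
proof -
  define pp where "pp = take m (l @ [hd u])"
  define v where "v = drop m (l @ [hd u]) @ tl u @ r"
  have une: "u \<noteq> []" using u by auto
  have lpp: "length pp = m" unfolding pp_def m_def by simp
  have w: "l @ u @ r = pp @ v @ []"
  proof -
    have "l @ u @ r = (l @ [hd u]) @ tl u @ r" using une by (cases u) auto
    also have "\<dots> = pp @ v" unfolding pp_def v_def by (metis append.assoc append_take_drop_id)
    finally show ?thesis by simp
  qed
  have ex: "x = (x - m) + length pp" "y = (y - m) + length pp" using lpp xy unfolding m_def by auto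
  have c: "cnd (K0 \<Phi>) pp [] v (x - m) (y - m)"
  proof -
    have "pp \<noteq> [] \<Longrightarrow> m = 1 \<and> length l = K0 \<Phi> + 1"
    proof -
      assume "pp \<noteq> []"
      then have "0 < length pp" by simp
      then show ?thesis using lpp l unfolding m_def by simp
    qed
    moreover have "length v = length l + 1 - m + (length u - 1) + length r" unfolding v_def by simp
    ultimately show ?thesis unfolding cnd_def using xy l unfolding m_def by (cases "pp = []") auto
  qed
  show "der \<Phi> (l@u@r) R x y \<longleftrightarrow> der \<Phi> (drop m (l @ [hd u]) @ tl u @ r) R (x - m) (y - m)"
    using der_loc[OF c, of R] unfolding w v_def by (metis ex)
  show "fires \<Phi> (l@u@r) x y \<longleftrightarrow> fires \<Phi> (drop m (l @ [hd u]) @ tl u @ r) (x - m) (y - m)"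
    using fires_loc[OF c] unfolding w v_def by (metis ex)
qed


definition ent :: "'s horn_formula \<Rightarrow> 's list \<Rightarrow> 's list \<Rightarrow> 's list \<Rightarrow> (nat \<times> nat \<times> nat) set" where
  "ent \<Phi> l u r = {(R, a, b). a \<le> K0 \<Phi> \<and> b \<le> K0 \<Phi> \<and>
     der \<Phi> (l @ u @ r) R (length l + 1 + a) (length l + length u - b)}"

definition err :: "'s horn_formula \<Rightarrow> 's list \<Rightarrow> 's list \<Rightarrow> 's list \<Rightarrow> bool" where
  "err \<Phi> l u r = (\<exists>x y. length l < x \<and> x \<le> y \<and> y \<le> length l + length u \<and> fires \<Phi> (l @ u @ r) x y)"

lemma ent_mem: "(S, a, b) \<in> ent \<Phi> l u r \<longleftrightarrow> a \<le> K0 \<Phi> \<and> b \<le> K0 \<Phi> \<and>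
     der \<Phi> (l @ u @ r) S (length l + 1 + a) (length l + length u - b)"
  by (simp add: ent_def)

lemma ent_b:
  fixes \<Phi> :: "'s horn_formula"
  assumes u: "2 \<le> length u" and b: "1 \<le> b" "b \<le> K0 \<Phi>"
  shows "(S, a, b) \<in> ent \<Phi> l u r \<longleftrightarrow> (S, a, b - 1) \<in> ent \<Phi> l (butlast u) (take (K0 \<Phi> + 1) (last u # r))"
proof -
  have y: "length l + length (butlast u) - (b - 1) = length l + length u - b" using u b by simp
  show ?thesis
  proof (cases "length l + 1 + a \<le> length l + length u - b")
    case True
    then show ?thesis unfolding ent_mem y using loc_b(1)[OF u, of "length l + 1 + a" "length l + length u - b" l \<Phi> r S] b
      by auto
  next
    case False
    then show ?thesis unfolding ent_mem y using der_le by fastforce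
  qed
qed

lemma ent_a:
  fixes \<Phi> :: "'s horn_formula" and l u r :: "'s list"
  defines "m \<equiv> length l + 1 - (K0 \<Phi> + 1)"
  assumes u: "2 \<le> length u" and a: "1 \<le> a" "a \<le> K0 \<Phi>" and l: "length l \<le> K0 \<Phi> + 1"
  shows "(S, a, 0) \<in> ent \<Phi> l u r \<longleftrightarrow> (S, a - 1, 0) \<in> ent \<Phi> (drop m (l @ [hd u])) (tl u) r"
proof -
  have ll: "length (drop m (l @ [hd u])) = length l + 1 - m" by simp
  have mle: "m \<le> length l + 1" unfolding m_def by simp
  have x: "length (drop m (l @ [hd u])) + 1 + (a - 1) = length l + 1 + a - m" using a mle by simp
  have y: "length (drop m (l @ [hd u])) + length (tl u) - 0 = length l + length u - 0 - m" using u mle by simp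
  show ?thesis
  proof (cases "length l + 1 + a \<le> length l + length u - 0")
    case True
    have "der \<Phi> (l @ u @ r) S (length l + 1 + a) (length l + length u - 0) \<longleftrightarrow>
      der \<Phi> (drop m (l @ [hd u]) @ tl u @ r) S (length l + 1 + a - m) (length l + length u - 0 - m)"
      unfolding m_def by (rule loc_a(1)[OF u l]) (use a True in auto)
    then show ?thesis unfolding ent_mem x y using a by auto
  next
    case False
    then show ?thesis unfolding ent_mem x y using der_le by fastforce
  qed
qed

lemma err_decomp:
  fixes \<Phi> :: "'s horn_formula" and l u r :: "'s list"
  defines "m \<equiv> length l + 1 - (K0 \<Phi> + 1)"
  assumes u: "2 \<le> length u" and l: "length l \<le> K0 \<Phi> + 1"
  shows "err \<Phi> l u r \<longleftrightarrow> err \<Phi> l (butlast u) (take (K0 \<Phi> + 1) (last u # r)) \<or>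
     err \<Phi> (drop m (l @ [hd u])) (tl u) r \<or> fires \<Phi> (l @ u @ r) (length l + 1) (length l + length u)"
proof -
  have ll: "length (drop m (l @ [hd u])) = length l + 1 - m" by simp
  have mle: "m \<le> length l + 1" unfolding m_def by simp
  show ?thesis
  proof
    assume "err \<Phi> l u r"
    then obtain x y where xy: "length l < x" "x \<le> y" "y \<le> length l + length u" and f: "fires \<Phi> (l @ u @ r) x y"
      unfolding err_def by blast
    show "err \<Phi> l (butlast u) (take (K0 \<Phi> + 1) (last u # r)) \<or>
      err \<Phi> (drop m (l @ [hd u])) (tl u) r \<or> fires \<Phi> (l @ u @ r) (length l + 1) (length l + length u)"
    proof (cases "y \<le> length l + length u - 1")
      case True
      then have "fires \<Phi> (l @ butlast u @ take (K0 \<Phi> + 1) (last u # r)) x y"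
        using loc_b(2)[OF u, of x y l \<Phi> r] xy f by auto
      then have "err \<Phi> l (butlast u) (take (K0 \<Phi> + 1) (last u # r))"
        unfolding err_def using xy True u by (intro exI[of _ x] exI[of _ y]) auto
      then show ?thesis by blast
    next
      case False
      show ?thesis
      proof (cases "length l + 2 \<le> x")
        case True
        have "fires \<Phi> (drop m (l @ [hd u]) @ tl u @ r) (x - m) (y - m)"
          using loc_a(2)[OF u l, of x y r] xy f True unfolding m_def by auto
        then have "err \<Phi> (drop m (l @ [hd u])) (tl u) r"
          unfolding err_def using xy True u mle by (intro exI[of _ "x - m"] exI[of _ "y - m"]) auto
        then show ?thesis by blast
      next
        case False2: False
        then have "x = length l + 1" "y = length l + length u" using xy False by auto
        then show ?thesis using f by blast
      qed
    qed
  next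
    assume "err \<Phi> l (butlast u) (take (K0 \<Phi> + 1) (last u # r)) \<or>
      err \<Phi> (drop m (l @ [hd u])) (tl u) r \<or> fires \<Phi> (l @ u @ r) (length l + 1) (length l + length u)"
    then show "err \<Phi> l u r"
    proof (elim disjE)
      assume "err \<Phi> l (butlast u) (take (K0 \<Phi> + 1) (last u # r))"
      then obtain x y where xy: "length l < x" "x \<le> y" "y \<le> length l + length (butlast u)"
        and f: "fires \<Phi> (l @ butlast u @ take (K0 \<Phi> + 1) (last u # r)) x y"
        unfolding err_def by blast
      have "fires \<Phi> (l @ u @ r) x y" using loc_b(2)[OF u, of x y l \<Phi> r] xy f by auto
      then show ?thesis unfolding err_def using xy by (intro exI[of _ x] exI[of _ y]) auto
    next
      assume "err \<Phi> (drop m (l @ [hd u])) (tl u) r"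
      then obtain x y where xy: "length l + 1 - m < x" "x \<le> y" "y \<le> length l + 1 - m + length (tl u)"
        and f: "fires \<Phi> (drop m (l @ [hd u]) @ tl u @ r) x y"
        unfolding err_def ll by blast
      have "fires \<Phi> (l @ u @ r) (x + m) (y + m)"
        using loc_a(2)[OF u l, of "x + m" "y + m" r] xy f mle u unfolding m_def by auto
      then show ?thesis unfolding err_def using xy mle u by (intro exI[of _ "x + m"] exI[of _ "y + m"]) auto
    next
      assume "fires \<Phi> (l @ u @ r) (length l + 1) (length l + length u)"
      then show ?thesis unfolding err_def using u by (intro exI[of _ "length l + 1"] exI[of _ "length l + length u"]) auto
    qed
  qed
qed

definition gH :: "'s horn_formula \<Rightarrow> 's list \<Rightarrow> ((('s list \<times> 's list) \<times> (nat \<times> nat \<times> nat) set \<times> bool) set \<times> 's list \<times> 's list)" where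
  "gH \<Phi> u = ({((l, r), ent \<Phi> l u r, err \<Phi> l u r) | l r. length l \<le> K0 \<Phi> + 1 \<and> length r \<le> K0 \<Phi> + 1},
     take (2 * K0 \<Phi> + 2) u, take (2 * K0 \<Phi> + 2) (rev u))"

lemma gH_fst:
  assumes "fst (gH \<Phi> u) = fst (gH \<Phi> v)" "length l \<le> K0 \<Phi> + 1" "length r \<le> K0 \<Phi> + 1"
  shows "ent \<Phi> l u r = ent \<Phi> l v r \<and> err \<Phi> l u r = err \<Phi> l v r"
proof -
  have "((l, r), ent \<Phi> l u r, err \<Phi> l u r) \<in> fst (gH \<Phi> u)" unfolding gH_def using assms(2,3) by auto
  then have "((l, r), ent \<Phi> l u r, err \<Phi> l u r) \<in> fst (gH \<Phi> v)" using assms(1) by simp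
  then show ?thesis unfolding gH_def by auto
qed

lemma take_Suc_hd: "u \<noteq> [] \<Longrightarrow> take (Suc n) u = hd u # take n (tl u)"
  by (cases u) auto

lemma gH_cong:
  fixes \<Phi> :: "'s horn_formula"
  assumes lu: "2 \<le> length u" and lv: "2 \<le> length v"
    and gb: "gH \<Phi> (butlast u) = gH \<Phi> (butlast v)" and gt: "gH \<Phi> (tl u) = gH \<Phi> (tl v)"
  shows "gH \<Phi> u = gH \<Phi> v"
proof -
  define k where "k = K0 \<Phi>"
  define N where "N = 2 * k + 2"
  have N: "N = Suc (2 * k + 1)" unfolding N_def by simp
  have tb: "take N (butlast u) = take N (butlast v)" "take N (rev (butlast u)) = take N (rev (butlast v))"
    using gb unfolding gH_def N_def k_def by auto
  have tt: "take N (tl u) = take N (tl v)" "take N (rev (tl u)) = take N (rev (tl v))"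
    using gt unfolding gH_def N_def k_def by auto
  have ne: "butlast u \<noteq> []" "butlast v \<noteq> []" "tl u \<noteq> []" "tl v \<noteq> []" "u \<noteq> []" "v \<noteq> []"
    using lu lv by (cases u; cases v; auto)+
  have hd_eq: "hd u = hd v"
  proof -
    have "hd u = hd (butlast u)" using lu by (cases u) auto
    also have "\<dots> = hd (take N (butlast u))" using ne N by (simp add: hd_take)
    also have "\<dots> = hd (take N (butlast v))" using tb by simp
    also have "\<dots> = hd (butlast v)" using ne N by (simp add: hd_take)
    also have "\<dots> = hd v" using lv by (cases v) auto
    finally show ?thesis .
  qed
  have last_eq: "last u = last v"
  proof -
    have "last u = last (tl u)" using lu by (cases u) auto
    also have "\<dots> = hd (rev (tl u))" using ne by (simp add: hd_rev)
    also have "\<dots> = hd (take N (rev (tl u)))" using ne N by (simp add: hd_take)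
    also have "\<dots> = hd (take N (rev (tl v)))" using tt by simp
    also have "\<dots> = hd (rev (tl v))" using ne N by (simp add: hd_take)
    also have "\<dots> = last (tl v)" using ne by (simp add: hd_rev)
    also have "\<dots> = last v" using lv by (cases v) auto
    finally show ?thesis .
  qed
  have tu: "take N u = take N v"
  proof -
    have "take N u = hd u # take (2 * k + 1) (tl u)" unfolding N using ne by (simp add: take_Suc_hd)
    also have "take (2 * k + 1) (tl u) = take (2 * k + 1) (take N (tl u))" unfolding N_def by simp
    finally have "take N u = hd u # take (2 * k + 1) (take N (tl u))" .
    moreover have "take N v = hd v # take (2 * k + 1) (take N (tl v))"
      unfolding N using ne by (simp add: take_Suc_hd)
    ultimately show ?thesis using tt hd_eq by simp
  qed
  have tr: "take N (rev u) = take N (rev v)"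
  proof -
    have ru: "rev u = last u # rev (butlast u)" using ne by (metis append_butlast_last_id rev.simps(2) rev_append rev_rev_ident append_Cons append_Nil rev_singleton_conv)
    have rv: "rev v = last v # rev (butlast v)" using ne by (metis append_butlast_last_id rev.simps(2) rev_append rev_rev_ident append_Cons append_Nil rev_singleton_conv)
    have "take N (rev u) = last u # take (2 * k + 1) (take N (rev (butlast u)))" unfolding ru N by simp
    moreover have "take N (rev v) = last v # take (2 * k + 1) (take N (rev (butlast v)))" unfolding rv N by simp
    ultimately show ?thesis using tb last_eq by simp
  qed
  show ?thesis
  proof (cases "length u < N \<or> length v < N")
    case True
    then have "u = v" using tu by (metis length_take min.absorb2 nat_less_le not_le take_all)
    then show ?thesis by simp
  next
    case False
    then have LU: "2 * K0 \<Phi> + 2 \<le> length u" and LV: "2 * K0 \<Phi> + 2 \<le> length v" unfolding N_def k_def by auto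
    have TU: "take (2 * K0 \<Phi> + 2) u = take (2 * K0 \<Phi> + 2) v" using tu unfolding N_def k_def .
    have TR: "take (2 * K0 \<Phi> + 2) (rev u) = take (2 * K0 \<Phi> + 2) (rev v)" using tr unfolding N_def k_def .
    have ctx: "ent \<Phi> l u r = ent \<Phi> l v r \<and> err \<Phi> l u r = err \<Phi> l v r"
      if l: "length l \<le> K0 \<Phi> + 1" and r: "length r \<le> K0 \<Phi> + 1" for l r
    proof -
      define r' where "r' = take (K0 \<Phi> + 1) (last u # r)"
      define m where "m = length l + 1 - (K0 \<Phi> + 1)"
      define l' where "l' = drop m (l @ [hd u])"
      have r'v: "r' = take (K0 \<Phi> + 1) (last v # r)" unfolding r'_def using last_eq by simp
      have l'v: "l' = drop m (l @ [hd v])" unfolding l'_def using hd_eq by simp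
      have lr': "length r' \<le> K0 \<Phi> + 1" unfolding r'_def by simp
      have ll': "length l' \<le> K0 \<Phi> + 1" unfolding l'_def m_def using l by simp
      have eb: "ent \<Phi> l (butlast u) r' = ent \<Phi> l (butlast v) r' \<and> err \<Phi> l (butlast u) r' = err \<Phi> l (butlast v) r'"
        using gH_fst[of \<Phi> "butlast u" "butlast v", OF _ l lr'] gb by simp
      have et: "ent \<Phi> l' (tl u) r = ent \<Phi> l' (tl v) r \<and> err \<Phi> l' (tl u) r = err \<Phi> l' (tl v) r"
        using gH_fst[of \<Phi> "tl u" "tl v", OF _ ll' r] gt by simp
      have A: "(S, a, b) \<in> ent \<Phi> l u r \<longleftrightarrow> (S, a, b) \<in> ent \<Phi> l v r"
        if ab: "a \<le> K0 \<Phi>" "b \<le> K0 \<Phi>" "(a, b) \<noteq> (0, 0)" for S a b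
      proof (cases "1 \<le> b")
        case True
        show ?thesis
          using ent_b[OF lu True ab(2), of S a l r] ent_b[OF lv True ab(2), of S a l r] eb
          unfolding r'_def r'v using last_eq by simp
      next
        case False
        then have b0: "b = 0" and a1: "1 \<le> a" using ab by auto
        show ?thesis
          using ent_a[OF lu a1 ab(1) l, of S r] ent_a[OF lv a1 ab(1) l, of S r] et
          unfolding b0 l'_def l'v m_def using hd_eq by simp
      qed
      have A': "der \<Phi> (l@u@r) S (length l + 1 + a) (length l + length u - b) \<longleftrightarrow>
          der \<Phi> (l@v@r) S (length l + 1 + a) (length l + length v - b)"
        if ab: "a \<le> K0 \<Phi>" "b \<le> K0 \<Phi>" "(a, b) \<noteq> (0, 0)" for S a b
        using A[OF ab, of S] ab unfolding ent_mem by simp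
      have W: "der \<Phi> (l@u@r) S (length l + 1) (length l + length u) \<longleftrightarrow>
          der \<Phi> (l@v@r) S (length l + 1) (length l + length v)" for S
      proof
        assume "der \<Phi> (l@u@r) S (length l + 1) (length l + length u)"
        then show "der \<Phi> (l@v@r) S (length l + 1) (length l + length v)"
          by (rule der_whole1[OF LU LV TU TR, rotated]) (use A' in blast)
      next
        assume "der \<Phi> (l@v@r) S (length l + 1) (length l + length v)"
        then show "der \<Phi> (l@u@r) S (length l + 1) (length l + length u)"
          by (rule der_whole1[OF LV LU TU[symmetric] TR[symmetric], rotated]) (use A' in blast)
      qed
      have A2: "der \<Phi> (l@u@r) S (length l + 1 + a) (length l + length u - b) \<longleftrightarrow>
          der \<Phi> (l@v@r) S (length l + 1 + a) (length l + length v - b)"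
        if ab: "a \<le> K0 \<Phi>" "b \<le> K0 \<Phi>" for S a b
      proof (cases "(a, b) = (0, 0)")
        case True then show ?thesis using W by simp
      next
        case False then show ?thesis using A'[OF ab False] by simp
      qed
      have entq: "ent \<Phi> l u r = ent \<Phi> l v r"
        unfolding ent_def using A2 by auto
      have F: "fires \<Phi> (l @ u @ r) (length l + 1) (length l + length u) \<longleftrightarrow>
          fires \<Phi> (l @ v @ r) (length l + 1) (length l + length v)"
      proof
        assume "fires \<Phi> (l @ u @ r) (length l + 1) (length l + length u)"
        then show "fires \<Phi> (l @ v @ r) (length l + 1) (length l + length v)"
          by (rule fires_whole[OF LU LV TU TR, rotated]) (use A2 in blast)
      next
        assume "fires \<Phi> (l @ v @ r) (length l + 1) (length l + length v)"
        then show "fires \<Phi> (l @ u @ r) (length l + 1) (length l + length u)"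
          by (rule fires_whole[OF LV LU TU[symmetric] TR[symmetric], rotated]) (use A2 in blast)
      qed
      have "err \<Phi> l u r = err \<Phi> l v r"
        using err_decomp[OF lu l, of r] err_decomp[OF lv l, of r] eb et F
        unfolding r'_def r'v l'_def l'v m_def using hd_eq last_eq by simp
      then show ?thesis using entq by simp
    qed
    have "fst (gH \<Phi> u) = fst (gH \<Phi> v)" unfolding gH_def using ctx by auto
    then show ?thesis using TU TR unfolding gH_def by simp
  qed
qed

lemma der_head: "der \<Phi> w R x y \<Longrightarrow> \<exists>hs. (hs, Some R) \<in> set \<Phi>"
  by (erule der.cases) auto

lemma horn_lang_gH:
  fixes \<Phi> :: "'s horn_formula"
  shows "horn_lang \<Phi> = {w. w \<noteq> [] \<and> (\<lambda>G. \<exists>e. (([], []), e, False) \<in> fst G) (gH \<Phi> w)}"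
proof -
  have e: "(\<exists>e. (([], []), e, False) \<in> fst (gH \<Phi> w)) \<longleftrightarrow> \<not> err \<Phi> [] w []" for w
  proof
    assume "\<exists>e. (([], []), e, False) \<in> fst (gH \<Phi> w)"
    then obtain e where "(([], []), e, False) \<in> fst (gH \<Phi> w)" by blast
    then have "\<exists>l r. (([] :: 's list, [] :: 's list), e, False) = ((l, r), ent \<Phi> l w r, err \<Phi> l w r)"
      unfolding gH_def by simp
    then show "\<not> err \<Phi> [] w []" by auto
  next
    assume "\<not> err \<Phi> [] w []"
    then have "(([], []), ent \<Phi> [] w [], False) \<in> fst (gH \<Phi> w)" unfolding gH_def by force
    then show "\<exists>e. (([], []), e, False) \<in> fst (gH \<Phi> w)" by blast
  qed
  have f: "err \<Phi> [] w [] \<longleftrightarrow> (\<exists>x y. fires \<Phi> w x y)" for w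
  proof
    assume "err \<Phi> [] w []"
    then show "\<exists>x y. fires \<Phi> w x y" unfolding err_def by auto
  next
    assume "\<exists>x y. fires \<Phi> w x y"
    then obtain x y where fx: "fires \<Phi> w x y" by blast
    have "1 \<le> x \<and> x \<le> y \<and> y \<le> length w" using fires_le[OF fx] .
    then show "err \<Phi> [] w []" unfolding err_def using fx by (intro exI[of _ x] exI[of _ y]) simp
  qed
  show ?thesis
  proof (rule set_eqI)
    fix w
    show "w \<in> horn_lang \<Phi> \<longleftrightarrow> w \<in> {w. w \<noteq> [] \<and> (\<lambda>G. \<exists>e. (([], []), e, False) \<in> fst G) (gH \<Phi> w)}"
      unfolding horn_lang_def mem_Collect_eq horn_sat_iff e f by (rule refl)
  qed
qed

lemma gH_finite:
  fixes \<Phi> :: "('s::finite) horn_formula"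
  shows "finite (gH \<Phi> ` {w. w \<noteq> []} :: _ set)"
proof -
  define K where "K = K0 \<Phi> + 1"
  define N where "N = 2 * K0 \<Phi> + 2"
  define H where "H = (\<lambda>cl. the (snd cl)) ` set \<Phi>"
  define C where "C = {l :: 's list. length l \<le> K} \<times> {r :: 's list. length r \<le> K}"
  define T where "T = {xs :: 's list. length xs \<le> N}"
  have fl: "finite {xs :: 's list. length xs \<le> n}" for n
    using finite_lists_length_le[OF finite_UNIV[where 'a = 's], of n] by simp
  have fC: "finite C" unfolding C_def using fl by simp
  have fH: "finite H" unfolding H_def by simp
  have fT: "finite T" unfolding T_def using fl by simp
  have entH: "ent \<Phi> l u r \<subseteq> H \<times> {..K0 \<Phi>} \<times> {..K0 \<Phi>}" for l u r
  proof
    fix z assume "z \<in> ent \<Phi> l u r"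
    then obtain R a b where z: "z = (R, a, b)" and ab: "a \<le> K0 \<Phi>" "b \<le> K0 \<Phi>"
      and d: "der \<Phi> (l @ u @ r) R (length l + 1 + a) (length l + length u - b)"
      unfolding ent_def by auto
    obtain hs where "(hs, Some R) \<in> set \<Phi>" using der_head[OF d] by blast
    then have "R \<in> H" unfolding H_def by force
    then show "z \<in> H \<times> {..K0 \<Phi>} \<times> {..K0 \<Phi>}" using z ab by auto
  qed
  have mem: "gH \<Phi> w \<in> Pow (C \<times> Pow (H \<times> {..K0 \<Phi>} \<times> {..K0 \<Phi>}) \<times> UNIV) \<times> T \<times> T" for w
  proof -
    have "fst (gH \<Phi> w) \<subseteq> C \<times> Pow (H \<times> {..K0 \<Phi>} \<times> {..K0 \<Phi>}) \<times> UNIV"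
    proof
      fix z assume "z \<in> fst (gH \<Phi> w)"
      then obtain l r where z: "z = ((l, r), ent \<Phi> l w r, err \<Phi> l w r)" and lr: "length l \<le> K0 \<Phi> + 1" "length r \<le> K0 \<Phi> + 1"
        unfolding gH_def by auto
      have "(l, r) \<in> C" unfolding C_def K_def using lr by simp
      then show "z \<in> C \<times> Pow (H \<times> {..K0 \<Phi>} \<times> {..K0 \<Phi>}) \<times> UNIV" unfolding z using entH[of l w r] by simp
    qed
    moreover have "fst (snd (gH \<Phi> w)) \<in> T" "snd (snd (gH \<Phi> w)) \<in> T"
      unfolding gH_def T_def N_def by simp_all
    ultimately show ?thesis by (cases "gH \<Phi> w") auto
  qed
  have "gH \<Phi> ` {w. w \<noteq> []} \<subseteq> Pow (C \<times> Pow (H \<times> {..K0 \<Phi>} \<times> {..K0 \<Phi>}) \<times> UNIV) \<times> T \<times> T"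
    using mem by blast
  moreover have "finite (Pow (C \<times> Pow (H \<times> {..K0 \<Phi>} \<times> {..K0 \<Phi>}) \<times> (UNIV :: bool set)) \<times> T \<times> T)"
    using fC fH fT by simp
  ultimately show ?thesis by (rule finite_subset)
qed

lemma gH_inj1:
  assumes "gH \<Phi> [a] = gH \<Phi> [b]" shows "a = b"
proof -
  have "fst (snd (gH \<Phi> [a])) = fst (snd (gH \<Phi> [b]))" using assms by simp
  then have "take (Suc (2 * K0 \<Phi> + 1)) [a] = take (Suc (2 * K0 \<Phi> + 1)) [b]" unfolding gH_def by simp
  then show ?thesis by simp
qed

theorem lemma10:
  shows "(incl_ESO_HORN :: ('s::finite) list set set) \<subseteq> Trellis"
proof
  fix L :: "'s list set" assume "L \<in> incl_ESO_HORN"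
  then obtain \<Phi> where L: "L = horn_lang \<Phi>" by (auto simp: incl_ESO_HORN_def)
  show "L \<in> Trellis" unfolding L horn_lang_gH
    by (rule trellis_intro[where g = "gH \<Phi>" and P = "\<lambda>G. \<exists>e. (([], []), e, False) \<in> fst G",
          OF gH_finite gH_cong gH_inj1])
qed

end
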